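(* Let $X\in L^\infty$, let $\mathcal{G}\subseteq\mathcal{H}$ be sub-$\sigma$-fields of $\mathcal{F}$, and let $Y\in\mathbb{E}[X\mid\mathcal{H}]$. Then $\varepsilon(Y,\mathcal{G})\le\varepsilon(X,\mathcal{G})$ a.s.
   Context: $\mathbb{K}$ is a local field with non-archimedean absolute value $|\cdot|$. $(\Omega,\mathcal{F},\mathbb{P})$ is a probability space; $L^\infty$ is the space of $\mathbb{K}$-valued random variables $X$ with $\operatorname{ess\,sup}|X|<\infty$; $L^\infty(\mathcal{G})$ its $\mathcal{G}$-measurable subspace. For a non-negative real random variable $S$, $\operatorname{ess\,sup}\{S\mid\mathcal{G}\}:=\sup_{p\ge1}\mathbb{E}[S^p\mid\mathcal{G}]^{1/p}$ (usual real conditional expectation), $\|X\|_\mathcal{G}:=\operatorname{ess\,sup}\{|X|\mid\mathcal{G}\}$, and $\mathbb{E}[X\mid\mathcal{G}]:=\{Y\in L^\infty(\mathcal{G}): \|X-Y\|_\mathcal{G}\le\|X-Z\|_\mathcal{G}\text{ a.s. for all }Z\in L^\infty(\mathcal{G})\}$. This set is non-empty, and $\|X-Y\|_\mathcal{G}$ is a.s. the same for all $Y\in\mathbb{E}[X\mid\mathcal{G}]$; this common random variable is denoted $\varepsilon(X,\mathcal{G})$. *)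

theory Defs
  imports "HOL-Probability.Probability"
begin

definition nonarch_abs :: "('k::field \<Rightarrow> real) \<Rightarrow> bool" where
  "nonarch_abs v \<longleftrightarrow>
     (\<forall>x. 0 \<le> v x) \<and> (\<forall>x. v x = 0 \<longleftrightarrow> x = 0) \<and>
     (\<forall>x y. v (x * y) = v x * v y) \<and>
     (\<forall>x y. v (x + y) \<le> max (v x) (v y))"

text \<open>Local field: non-archimedean, non-trivial (non-discrete topology) and locally
  compact, i.e. the closed unit ball is (sequentially) compact for the metric
  d(x,y) = v(x - y).\<close>
definition local_field_abs :: "('k::field \<Rightarrow> real) \<Rightarrow> bool" where
  "local_field_abs v \<longleftrightarrow> nonarch_abs v \<and>
     (\<exists>x. v x \<noteq> 0 \<and> v x \<noteq> 1) \<and>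
     (\<forall>s::nat \<Rightarrow> 'k. (\<forall>n. v (s n) \<le> 1) \<longrightarrow>
        (\<exists>l r. strict_mono r \<and> v l \<le> 1 \<and> (\<lambda>n. v (s (r n) - l)) \<longlonglongrightarrow> 0))"

definition Kborel :: "('k::field \<Rightarrow> real) \<Rightarrow> 'k measure" where
  "Kborel v = sigma UNIV {{y. v (y - x) < r} | x r. True}"

definition cond_esssup :: "'a measure \<Rightarrow> 'a measure \<Rightarrow> ('a \<Rightarrow> real) \<Rightarrow> 'a \<Rightarrow> ereal" where
  "cond_esssup M G S \<omega> =
     (SUP p\<in>{1::nat..}. ereal (root p (real_cond_exp M G (\<lambda>w. S w ^ p) \<omega>)))"

definition cnorm :: "'a measure \<Rightarrow> 'a measure \<Rightarrow> ('k::field \<Rightarrow> real) \<Rightarrow> ('a \<Rightarrow> 'k) \<Rightarrow> 'a \<Rightarrow> ereal" where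
  "cnorm M G v X = cond_esssup M G (\<lambda>\<omega>. v (X \<omega>))"

definition Linf :: "'a measure \<Rightarrow> 'a measure \<Rightarrow> ('k::field \<Rightarrow> real) \<Rightarrow> ('a \<Rightarrow> 'k) set" where
  "Linf M G v = {X. X \<in> measurable G (Kborel v) \<and> (\<exists>C. AE \<omega> in M. v (X \<omega>) \<le> C)}"

definition condE :: "'a measure \<Rightarrow> 'a measure \<Rightarrow> ('k::field \<Rightarrow> real) \<Rightarrow> ('a \<Rightarrow> 'k) \<Rightarrow> ('a \<Rightarrow> 'k) set" where
  "condE M G v X = {Y \<in> Linf M G v. \<forall>Z \<in> Linf M G v.
      AE \<omega> in M. cnorm M G v (\<lambda>w. X w - Y w) \<omega> \<le> cnorm M G v (\<lambda>w. X w - Z w) \<omega>}"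

text \<open>\<epsilon>(X, G) = ||X - Y||_G for any Y \<in> E[X | G].\<close>
definition eps :: "'a measure \<Rightarrow> 'a measure \<Rightarrow> ('k::field \<Rightarrow> real) \<Rightarrow> ('a \<Rightarrow> 'k) \<Rightarrow> 'a \<Rightarrow> ereal" where
  "eps M G v X = cnorm M G v (\<lambda>w. X w - (SOME Y. Y \<in> condE M G v X) w)"

end

theory Submission
  imports Defs
begin


locale lfa =
  fixes v :: "'k::field \<Rightarrow> real"
  assumes lf: "local_field_abs v"
begin

lemma na: "nonarch_abs v" using lf unfolding local_field_abs_def by auto

lemma v_nonneg[simp]: "0 \<le> v x" using na unfolding nonarch_abs_def by auto
lemma v_zero_iff[simp]: "v x = 0 \<longleftrightarrow> x = 0" using na unfolding nonarch_abs_def by auto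
lemma v_mult: "v (x * y) = v x * v y" using na unfolding nonarch_abs_def by auto
lemma v_add: "v (x + y) \<le> max (v x) (v y)" using na unfolding nonarch_abs_def by auto
lemma v_0[simp]: "v 0 = 0" by simp
lemma v_pos: "x \<noteq> 0 \<Longrightarrow> 0 < v x" using v_nonneg[of x] v_zero_iff[of x] by linarith

lemma v_1[simp]: "v 1 = 1"
proof -
  have "v 1 = v 1 * v 1" using v_mult[of 1 1] by simp
  moreover have "v 1 \<noteq> 0" by simp
  ultimately show ?thesis by simp
qed

lemma sq1: "0 \<le> (x::real) \<Longrightarrow> x * x = 1 \<Longrightarrow> x = 1"
  by (metis abs_of_nonneg abs_square_eq_1 power2_eq_square)

lemma v_m1[simp]: "v (-1) = 1"
proof -
  have "v (-1) * v (-1) = 1" using v_mult[of "-1" "-1"] by simp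
  moreover have "0 \<le> v (-1)" by simp
  ultimately show ?thesis using sq1 by blast
qed

lemma v_uminus[simp]: "v (- x) = v x"
  using v_mult[of "-1" x] by simp

lemma v_sub_sym: "v (x - y) = v (y - x)"
  using v_uminus[of "x - y"] by simp

lemma v_diff: "v (x - y) \<le> max (v x) (v y)"
  using v_add[of x "-y"] by simp

lemma v_tri: "v (x - z) \<le> max (v (x - y)) (v (y - z))"
  using v_add[of "x - y" "y - z"] by simp

lemma v_add_less: assumes "v x < v y" shows "v (x + y) = v y"
proof -
  have "v y \<le> max (v (x + y)) (v x)" using v_diff[of "x + y" x] by simp
  then have "v y \<le> v (x + y)" using assms by auto
  moreover have "v (x + y) \<le> v y" using v_add[of x y] assms by auto
  ultimately show ?thesis by simp
qed

lemma v_diff_neq: assumes "v x \<noteq> v y" shows "v (x - y) = max (v x) (v y)"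
proof (cases "v x < v y")
  case True
  have "v (x + (- y)) = v (-y)" using v_add_less[of x "-y"] True by simp
  then show ?thesis using True by simp
next
  case False
  then have "v y < v x" using assms by auto
  have "v ((-y) + x) = v x" using v_add_less[of "-y" x] \<open>v y < v x\<close> by simp
  then show ?thesis using \<open>v y < v x\<close> by (simp add: add.commute)
qed

lemma v_inverse: "v (inverse x) = inverse (v x)"
proof (cases "x = 0")
  case False
  have h: "v x * v (inverse x) = 1" using v_mult[of x "inverse x"] False by (simp del: inverse_eq_divide)
  show ?thesis using inverse_unique[OF h] by simp
qed simp

lemma v_divide: "v (x / y) = v x / v y"
  by (simp add: divide_inverse v_mult v_inverse)

lemma v_power: "v (x ^ n) = v x ^ n"
  by (induction n) (simp_all add: v_mult)

lemma exists_big: "\<exists>t. 1 < v t"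
proof -
  obtain x where x: "v x \<noteq> 0" "v x \<noteq> 1" using lf unfolding local_field_abs_def by auto
  show ?thesis
  proof (cases "1 < v x")
    case False
    then have "v x < 1" using x by auto
    moreover have "0 < v x" using x v_nonneg[of x] by linarith
    ultimately have "1 < v (inverse x)" by (simp add: v_inverse one_less_inverse)
    then show ?thesis by blast
  qed blast
qed

lemma exists_ge: "\<exists>y. B \<le> v y \<and> 0 < v y"
proof -
  obtain t where t: "1 < v t" using exists_big by blast
  obtain n where "B < v t ^ n" using real_arch_pow[OF t] by blast
  then show ?thesis using t by (intro exI[of _ "t ^ n"]) (simp add: v_power)
qed

lemma exists_small: assumes "0 < e" shows "\<exists>y. v y < e \<and> 0 < v y"
proof -
  obtain y where y: "2 / e \<le> v y" "0 < v y" using exists_ge by blast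
  have "v (inverse y) = inverse (v y)" by (rule v_inverse)
  moreover have "inverse (v y) < e"
  proof -
    have "inverse (v y) \<le> inverse (2 / e)" using y assms by (intro le_imp_inverse_le) auto
    then have "inverse (v y) \<le> e / 2" by simp
    then show ?thesis using assms by simp
  qed
  ultimately show ?thesis using y by (intro exI[of _ "inverse y"]) auto
qed

lemma seqc1: fixes s :: "nat \<Rightarrow> 'k" assumes "\<forall>n. v (s n) \<le> 1" shows
        "\<exists>l r. strict_mono r \<and> v l \<le> 1 \<and> (\<lambda>n. v (s (r n) - l)) \<longlonglongrightarrow> 0"
proof -
  have "\<forall>s::nat \<Rightarrow> 'k. (\<forall>n. v (s n) \<le> 1) \<longrightarrow>
        (\<exists>l r. strict_mono r \<and> v l \<le> 1 \<and> (\<lambda>n. v (s (r n) - l)) \<longlonglongrightarrow> 0)"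
    using lf unfolding local_field_abs_def by (elim conjE)
  then have "(\<forall>n. v (s n) \<le> 1) \<longrightarrow>
        (\<exists>l r. strict_mono r \<and> v l \<le> 1 \<and> (\<lambda>n. v (s (r n) - l)) \<longlonglongrightarrow> 0)"
    by (rule spec[of _ s])
  then show ?thesis using assms by (rule mp)
qed

lemma seqc: fixes s :: "nat \<Rightarrow> 'k" assumes "\<And>n. v (s n) \<le> B"
  shows "\<exists>l r. strict_mono r \<and> (\<lambda>n. v (s (r n) - l)) \<longlonglongrightarrow> 0"
proof -
  obtain y where y: "B \<le> v y" "0 < v y" using exists_ge by blast
  have "\<forall>n. v (s n / y) \<le> 1"
  proof
    fix n
    have "v (s n) \<le> v y" using assms[of n] y(1) by linarith
    then show "v (s n / y) \<le> 1" using y(2) by (simp add: v_divide)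
  qed
  then obtain l r where lr: "strict_mono r" "(\<lambda>n. v (s (r n) / y - l)) \<longlonglongrightarrow> 0"
    using seqc1[of "\<lambda>n. s n / y"] by blast
  have yne: "y \<noteq> 0" using y by auto
  have eq: "v (s (r n) - l * y) = v (s (r n) / y - l) * v y" for n
  proof -
    have "s (r n) - l * y = (s (r n) / y - l) * y" using yne by (simp add: field_simps)
    then show ?thesis by (simp add: v_mult)
  qed
  have "(\<lambda>n. v (s (r n) / y - l) * v y) \<longlonglongrightarrow> 0 * v y"
    by (intro tendsto_intros lr)
  then show ?thesis using lr(1) by (intro exI[of _ "l * y"] exI[of _ r]) (simp add: eq)
qed

lemma values_finite: assumes "0 < a" shows "finite {x \<in> range v. a \<le> x \<and> x \<le> b}"
proof (rule ccontr)
  assume "infinite {x \<in> range v. a \<le> x \<and> x \<le> b}"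
  then obtain f :: "nat \<Rightarrow> real" where f: "inj f" "range f \<subseteq> {x \<in> range v. a \<le> x \<and> x \<le> b}"
    using infinite_countable_subset by blast
  have fr: "f n \<in> range v" for n using f(2) by blast
  have "\<forall>n. \<exists>y. v y = f n" using fr by (metis rangeE)
  from choice[OF this] obtain s where s0: "\<forall>n. v (s n) = f n" by blast
  then have s: "\<And>n. v (s n) = f n" by blast
  have sb: "v (s n) \<le> b" "a \<le> v (s n)" for n using s f(2) by auto
  obtain l r where lr: "strict_mono r" "(\<lambda>n. v (s (r n) - l)) \<longlonglongrightarrow> 0"
    using seqc[of s b] sb by blast
  obtain N where N: "\<And>n. n \<ge> N \<Longrightarrow> v (s (r n) - l) < a"
    using lr(2) assms unfolding LIMSEQ_def dist_real_def by fastforce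
  have "r N < r (Suc N)" using lr(1) by (simp add: strict_mono_def)
  then have "r N \<noteq> r (Suc N)" by simp
  then have "v (s (r N)) \<noteq> v (s (r (Suc N)))" using f(1) s unfolding inj_def by metis
  then have "v (s (r N) - s (r (Suc N))) = max (v (s (r N))) (v (s (r (Suc N))))"
    by (rule v_diff_neq)
  then have "a \<le> v (s (r N) - s (r (Suc N)))" using sb by (auto simp: le_max_iff_disj)
  moreover have "v (s (r N) - s (r (Suc N))) \<le> max (v (s (r N) - l)) (v (l - s (r (Suc N))))"
    by (rule v_tri)
  moreover have "v (l - s (r (Suc N))) < a" using N[of "Suc N"] by (simp add: v_sub_sym)
  ultimately show False using N[of N] by auto
qed

definition cauchyv :: "(nat \<Rightarrow> 'k) \<Rightarrow> bool" where
  "cauchyv s \<longleftrightarrow> (\<forall>e>0. \<exists>N. \<forall>n\<ge>N. \<forall>m\<ge>N. v (s n - s m) < e)"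

lemma complete: assumes "cauchyv s" shows "\<exists>l. (\<lambda>n. v (s n - l)) \<longlonglongrightarrow> 0"
proof -
  obtain N where N: "\<And>n m. n \<ge> N \<Longrightarrow> m \<ge> N \<Longrightarrow> v (s n - s m) < 1"
    using assms unfolding cauchyv_def by (meson zero_less_one)
  define B where "B = (\<Sum>k\<le>N. v (s k)) + 1"
  have bnd: "v (s n) \<le> B" for n
  proof (cases "n \<le> N")
    case True
    have "v (s n) \<le> (\<Sum>k\<le>N. v (s k))"
      using True by (intro member_le_sum) auto
    then show ?thesis unfolding B_def by simp
  next
    case False
    have "v (s n) = v ((s n - s N) + s N)" by simp
    also have "\<dots> \<le> max (v (s n - s N)) (v (s N))" by (rule v_add)
    also have "\<dots> \<le> B"
    proof -
      have "v (s N) \<le> (\<Sum>k\<le>N. v (s k))" by (intro member_le_sum) auto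
      moreover have "0 \<le> (\<Sum>k\<le>N. v (s k))" by (intro sum_nonneg) auto
      ultimately show ?thesis using N[of n N] False unfolding B_def by auto
    qed
    finally show ?thesis .
  qed
  obtain l r where lr: "strict_mono r" "(\<lambda>n. v (s (r n) - l)) \<longlonglongrightarrow> 0"
    using seqc[of s B] bnd by blast
  have "(\<lambda>n. v (s n - l)) \<longlonglongrightarrow> 0"
    unfolding LIMSEQ_def dist_real_def
  proof (intro allI impI)
    fix e :: real assume e: "0 < e"
    obtain N1 where N1: "\<And>n m. n \<ge> N1 \<Longrightarrow> m \<ge> N1 \<Longrightarrow> v (s n - s m) < e"
      using assms e unfolding cauchyv_def by meson
    obtain N2 where N2: "\<And>n. n \<ge> N2 \<Longrightarrow> v (s (r n) - l) < e"
      using lr(2) e unfolding LIMSEQ_def dist_real_def by fastforce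
    show "\<exists>no. \<forall>n\<ge>no. \<bar>v (s n - l) - 0\<bar> < e"
    proof (intro exI allI impI)
      fix n assume n: "N1 \<le> n"
      let ?k = "max N1 N2"
      have "r ?k \<ge> ?k" using lr(1) by (rule strict_mono_imp_increasing)
      then have "r ?k \<ge> N1" "r ?k \<ge> N2" by auto
      then have "v (s n - s (r ?k)) < e" using N1[of n "r ?k"] n by auto
      moreover have "v (s (r ?k) - l) < e" using N2[of ?k] by auto
      moreover have "v (s n - l) \<le> max (v (s n - s (r ?k))) (v (s (r ?k) - l))" by (rule v_tri)
      ultimately show "\<bar>v (s n - l) - 0\<bar> < e" by auto
    qed
  qed
  then show ?thesis by blast
qed

end


context lfa
begin

lemma totally_bounded:
  assumes e: "0 < e"
  shows "\<exists>F. finite F \<and> (\<forall>y. v y \<le> B \<longrightarrow> (\<exists>f\<in>F. v (y - f) < e))"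
proof (rule ccontr)
  assume "\<not> ?thesis"
  then have H: "\<And>F. finite F \<Longrightarrow> \<exists>y. v y \<le> B \<and> (\<forall>f\<in>F. e \<le> v (y - f))"
    by (meson not_less)
  define nxt where "nxt = (\<lambda>l. SOME y. v y \<le> B \<and> (\<forall>f\<in>set l. e \<le> v (y - f)))"
  define g where "g = rec_nat [] (\<lambda>n l. nxt l # l)"
  have g0: "g 0 = []" and gS: "g (Suc n) = nxt (g n) # g n" for n unfolding g_def by simp_all
  define s where "s n = nxt (g n)" for n
  have nx: "v (nxt l) \<le> B \<and> (\<forall>f\<in>set l. e \<le> v (nxt l - f))" for l
    unfolding nxt_def by (rule someI_ex, rule H, simp)
  have gset: "set (g n) = s ` {..<n}" for n
    by (induction n) (auto simp: g0 gS s_def lessThan_Suc)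
  have sB: "v (s n) \<le> B" for n using nx unfolding s_def by blast
  have sep: "k < n \<Longrightarrow> e \<le> v (s n - s k)" for k n
    using nx[of "g n"] gset[of n] unfolding s_def by auto
  obtain l r where lr: "strict_mono r" "(\<lambda>n. v (s (r n) - l)) \<longlonglongrightarrow> 0"
    using seqc[of s B] sB by blast
  obtain N where N: "\<And>n. n \<ge> N \<Longrightarrow> v (s (r n) - l) < e"
    using lr(2) e unfolding LIMSEQ_def dist_real_def by fastforce
  have "r N < r (Suc N)" using lr(1) by (simp add: strict_mono_def)
  then have "e \<le> v (s (r (Suc N)) - s (r N))" by (rule sep)
  moreover have "v (s (r (Suc N)) - s (r N)) \<le> max (v (s (r (Suc N)) - l)) (v (l - s (r N)))"
    by (rule v_tri)
  moreover have "v (l - s (r N)) < e" using N[of N] by (simp add: v_sub_sym)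
  ultimately show False using N[of "Suc N"] by auto
qed

lemma dense_countable: "\<exists>D. countable D \<and> (\<forall>y e. 0 < e \<longrightarrow> (\<exists>d\<in>D. v (y - d) < e))"
proof -
  define F where "F k j = (SOME F. finite F \<and> (\<forall>y. v y \<le> real k \<longrightarrow> (\<exists>f\<in>F. v (y - f) < 1 / real (Suc j))))" for k j :: nat
  have Fp: "finite (F k j) \<and> (\<forall>y. v y \<le> real k \<longrightarrow> (\<exists>f\<in>F k j. v (y - f) < 1 / real (Suc j)))" for k j
    unfolding F_def by (rule someI_ex, rule totally_bounded, simp)
  define D where "D = (\<Union>k j. F k j)"
  have "countable (F k j)" for k j using Fp[of k j] by (intro countable_finite) blast
  then have "countable D" unfolding D_def by (intro countable_UN) auto
  moreover have "\<exists>d\<in>D. v (y - d) < e" if e: "0 < e" for y e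
  proof -
    obtain j where j: "inverse (real (Suc j)) < e" using reals_Archimedean[OF e] by blast
    define k where "k = nat \<lceil>v y\<rceil>"
    have "v y \<le> real k" unfolding k_def by (rule real_nat_ceiling_ge)
    then obtain f where "f \<in> F k j" "v (y - f) < 1 / real (Suc j)" using Fp by blast
    moreover have "f \<in> D" using \<open>f \<in> F k j\<close> unfolding D_def by blast
    ultimately show ?thesis using j by (intro bexI[of _ f]) (auto simp: inverse_eq_divide)
  qed
  ultimately show ?thesis by blast
qed

end


context lfa
begin

lemma space_Kborel[simp]: "space (Kborel v) = UNIV"
  unfolding Kborel_def by (simp add: space_measure_of_conv)

lemma sets_Kborel: "sets (Kborel v) = sigma_sets UNIV {{y. v (y - x) < r} | x r. True}"
  unfolding Kborel_def by (rule sets_measure_of) auto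

lemma ball_in_Kborel: "{y. v (y - x) < r} \<in> sets (Kborel v)"
  unfolding sets_Kborel by (rule sigma_sets.Basic) blast

lemma measurable_K_iff:
  "f \<in> measurable N (Kborel v) \<longleftrightarrow> (\<forall>x r. {w\<in>space N. v (f w - x) < r} \<in> sets N)"
proof
  assume f: "f \<in> measurable N (Kborel v)"
  show "\<forall>x r. {w\<in>space N. v (f w - x) < r} \<in> sets N"
  proof (intro allI)
    fix x r
    have "f -` {y. v (y - x) < r} \<inter> space N \<in> sets N"
      using measurable_sets[OF f ball_in_Kborel] .
    moreover have "f -` {y. v (y - x) < r} \<inter> space N = {w\<in>space N. v (f w - x) < r}" by auto
    ultimately show "{w\<in>space N. v (f w - x) < r} \<in> sets N" by simp
  qed
next
  assume H: "\<forall>x r. {w\<in>space N. v (f w - x) < r} \<in> sets N"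
  show "f \<in> measurable N (Kborel v)"
    unfolding Kborel_def
  proof (rule measurable_measure_of)
    fix y assume "y \<in> {{y. v (y - x) < r} | x r. True}"
    then obtain x r where y: "y = {y. v (y - x) < r}" by blast
    have "f -` y \<inter> space N = {w\<in>space N. v (f w - x) < r}" unfolding y by auto
    then show "f -` y \<inter> space N \<in> sets N" using H by simp
  qed auto
qed

lemma meas_vshift:
  assumes "f \<in> measurable N (Kborel v)"
  shows "(\<lambda>w. v (f w - c)) \<in> borel_measurable N"
  unfolding borel_measurable_iff_less using assms measurable_K_iff by blast

lemma meas_v:
  assumes "f \<in> measurable N (Kborel v)"
  shows "(\<lambda>w. v (f w)) \<in> borel_measurable N"
  using meas_vshift[OF assms, of 0] by simp

lemma meas_const: "(\<lambda>w. c) \<in> measurable N (Kborel v)"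
  by simp

lemma meas_diff:
  assumes f: "f \<in> measurable N (Kborel v)" and g: "g \<in> measurable N (Kborel v)"
  shows "(\<lambda>w. f w - g w) \<in> measurable N (Kborel v)"
proof -
  obtain D where D: "countable D" "\<And>y e. 0 < e \<Longrightarrow> \<exists>d\<in>D. v (y - d) < e"
    using dense_countable by blast
  have "{w\<in>space N. v (f w - g w - x) < r} \<in> sets N" for x r
  proof -
    have eq: "{w\<in>space N. v (f w - g w - x) < r} =
      (\<Union>d\<in>D. {w\<in>space N. v (f w - d) < r} \<inter> {w\<in>space N. v (g w - (d - x)) < r})"
    proof (intro equalityI subsetI)
      fix w assume w: "w \<in> {w\<in>space N. v (f w - g w - x) < r}"
      then have "v (f w - g w - x) < r" by blast
      then have r: "0 < r" using v_nonneg[of "f w - g w - x"] by linarith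
      obtain d where d: "d \<in> D" "v (f w - d) < r" using D(2)[OF r] by blast
      have "g w - (d - x) = (f w - d) - (f w - g w - x)" by (simp add: algebra_simps)
      then have "v (g w - (d - x)) \<le> max (v (f w - d)) (v (f w - g w - x))"
        using v_diff by metis
      then have "v (g w - (d - x)) < r" using d w by auto
      then show "w \<in> (\<Union>d\<in>D. {w\<in>space N. v (f w - d) < r} \<inter> {w\<in>space N. v (g w - (d - x)) < r})"
        using d w by blast
    next
      fix w assume "w \<in> (\<Union>d\<in>D. {w\<in>space N. v (f w - d) < r} \<inter> {w\<in>space N. v (g w - (d - x)) < r})"
      then obtain d where d: "w \<in> space N" "v (f w - d) < r" "v (g w - (d - x)) < r" by blast
      have "f w - g w - x = (f w - d) - (g w - (d - x))" by (simp add: algebra_simps)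
      then have "v (f w - g w - x) \<le> max (v (f w - d)) (v (g w - (d - x)))"
        using v_diff by metis
      then show "w \<in> {w\<in>space N. v (f w - g w - x) < r}" using d by auto
    qed
    have "(\<Union>d\<in>D. {w\<in>space N. v (f w - d) < r} \<inter> {w\<in>space N. v (g w - (d - x)) < r}) \<in> sets N"
      using f g D(1) measurable_K_iff by (intro sets.countable_UN'' sets.Int) blast+
    then show ?thesis using eq by simp
  qed
  then show ?thesis unfolding measurable_K_iff by simp
qed

end


lemma real_arch_pow_inv': "0 < (y::real) \<Longrightarrow> x < 1 \<Longrightarrow> \<exists>n. x ^ n < y"
  using real_arch_pow_inv by blast

locale cps = prob_space M for M :: "'a measure" +
  fixes G :: "'a measure"
  assumes subG: "subalgebra M G"

sublocale cps \<subseteq> fms: finite_measure_subalgebra M G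
  by unfold_locales (rule subG)

context cps
begin

lemma sets_G_M: "A \<in> sets G \<Longrightarrow> A \<in> sets M"
  using subG unfolding subalgebra_def by auto

lemma space_G: "space G = space M"
  using subG unfolding subalgebra_def by auto

lemma CE_meas: "cond_esssup M G S \<in> borel_measurable G"
  unfolding cond_esssup_def by measurable

lemma int_pow:
  fixes S :: "'a \<Rightarrow> real"
  assumes "S \<in> borel_measurable M" "\<And>w. 0 \<le> S w" "AE w in M. S w \<le> C"
  shows "integrable M (\<lambda>w. S w ^ p)"
proof (rule integrable_const_bound[where B="C ^ p"])
  show "AE w in M. norm (S w ^ p) \<le> C ^ p"
    using assms(3) by eventually_elim (simp add: assms(2) power_mono)
qed (use assms(1) in measurable)

lemma CE_least:
  fixes S :: "'a \<Rightarrow> real" and T :: "'a \<Rightarrow> ereal"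
  assumes Sm: "S \<in> borel_measurable M" and Snn: "\<And>w. 0 \<le> S w"
    and Sb: "AE w in M. S w \<le> C" and C: "0 \<le> C"
    and Tm: "T \<in> borel_measurable G" and ST: "AE w in M. ereal (S w) \<le> T w"
  shows "AE w in M. cond_esssup M G S w \<le> T w"
proof -
  define T' where "T' w = (if ereal C \<le> T w then C else max 0 (real_of_ereal (T w)))" for w
  have T'm: "T' \<in> borel_measurable G" unfolding T'_def using Tm by measurable
  have T'mM: "T' \<in> borel_measurable M" using measurable_from_subalg[OF subG T'm] .
  have T'nn: "0 \<le> T' w" for w unfolding T'_def using C by auto
  have T'b: "T' w \<le> C" for w unfolding T'_def
    using C by (cases "T w") auto
  have AE1: "AE w in M. S w \<le> T' w \<and> ereal (T' w) \<le> T w"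
    using Sb ST
  proof eventually_elim
    case (elim w)
    show ?case
    proof (cases "ereal C \<le> T w")
      case True
      then show ?thesis using elim unfolding T'_def by auto
    next
      case False
      have "0 \<le> T w" using elim(2) Snn[of w] by (metis ereal_less_eq(5) order_trans)
      moreover have "T w < ereal C" using False by simp
      ultimately obtain t where t: "T w = ereal t" "0 \<le> t"
        by (cases "T w") auto
      then show ?thesis using elim False unfolding T'_def by auto
    qed
  qed
  have intT: "integrable M (\<lambda>w. T' w ^ p)" for p
    by (rule int_pow[OF T'mM T'nn]) (use T'b in auto)
  have intS: "integrable M (\<lambda>w. S w ^ p)" for p by (rule int_pow[OF Sm Snn Sb])
  have "AE w in M. 1 \<le> p \<longrightarrow> root p (real_cond_exp M G (\<lambda>w. S w ^ p) w) \<le> T' w" for p :: nat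
  proof -
    have a1: "AE w in M. real_cond_exp M G (\<lambda>w. S w ^ p) w \<le> real_cond_exp M G (\<lambda>w. T' w ^ p) w"
      using AE1 by (intro fms.real_cond_exp_mono intS intT)
        (auto elim!: eventually_mono simp: Snn power_mono)
    have a2: "AE w in M. real_cond_exp M G (\<lambda>w. T' w ^ p) w = T' w ^ p"
      by (rule fms.real_cond_exp_F_meas[OF intT]) (use T'm in measurable)
    show ?thesis using a1 a2
    proof eventually_elim
      case (elim w)
      show ?case
      proof
        assume p: "1 \<le> p"
        have "root p (real_cond_exp M G (\<lambda>w. S w ^ p) w) \<le> root p (T' w ^ p)"
          using elim p by simp
        also have "\<dots> = T' w" using p T'nn[of w] by (simp add: real_root_power_cancel)
        finally show "root p (real_cond_exp M G (\<lambda>w. S w ^ p) w) \<le> T' w" .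
      qed
    qed
  qed
  then have "AE w in M. \<forall>p::nat. 1 \<le> p \<longrightarrow> root p (real_cond_exp M G (\<lambda>w. S w ^ p) w) \<le> T' w"
    by (simp add: AE_all_countable)
  then show ?thesis using AE1
  proof eventually_elim
    case (elim w)
    have "cond_esssup M G S w \<le> ereal (T' w)"
      unfolding cond_esssup_def using elim(1) by (intro SUP_least) auto
    then show ?case using elim(2) by (meson order_trans)
  qed
qed

lemma CE_nonneg:
  fixes S :: "'a \<Rightarrow> real"
  assumes Sm: "S \<in> borel_measurable M" and Snn: "\<And>w. 0 \<le> S w"
    and Sb: "AE w in M. S w \<le> C"
  shows "AE w in M. 0 \<le> cond_esssup M G S w"
proof -
  have "AE w in M. 0 \<le> real_cond_exp M G (\<lambda>w. S w ^ 1) w"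
    by (rule fms.real_cond_exp_pos) (use Snn Sm in auto)
  then show ?thesis
  proof eventually_elim
    case (elim w)
    have "ereal (root 1 (real_cond_exp M G (\<lambda>w. S w ^ 1) w)) \<le> cond_esssup M G S w"
      unfolding cond_esssup_def by (rule SUP_upper) auto
    moreover have "0 \<le> ereal (root 1 (real_cond_exp M G (\<lambda>w. S w ^ 1) w))" using elim by simp
    ultimately show ?case by (rule order_trans[rotated])
  qed
qed

lemma CE_upper_cd:
  fixes S :: "'a \<Rightarrow> real"
  assumes Sm: "S \<in> borel_measurable M" and Snn: "\<And>w. 0 \<le> S w"
    and Sb: "AE w in M. S w \<le> C" and c: "0 < c" and cd: "c < d"
  shows "AE w in M. cond_esssup M G S w \<le> ereal c \<longrightarrow> S w \<le> d"
proof -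
  let ?Q = "cond_esssup M G S"
  define A where "A = {w \<in> space M. ?Q w \<le> ereal c}"
  define B where "B = {w \<in> space M. ?Q w \<le> ereal c \<and> d < S w}"
  have QmG: "?Q \<in> borel_measurable G" by (rule CE_meas)
  have AG: "A \<in> sets G" unfolding A_def space_G[symmetric] using QmG by measurable
  have AM: "A \<in> sets M" using AG by (rule sets_G_M)
  have QmM: "?Q \<in> borel_measurable M" using measurable_from_subalg[OF subG QmG] .
  have BM: "B \<in> sets M" unfolding B_def using QmM Sm by measurable
  have BA: "B \<subseteq> A" unfolding A_def B_def by auto
  have key: "d ^ p * measure M B \<le> c ^ p" if p: "1 \<le> p" for p :: nat
  proof -
    let ?E = "real_cond_exp M G (\<lambda>w. S w ^ p)"
    have intS: "integrable M (\<lambda>w. S w ^ p)" by (rule int_pow[OF Sm Snn Sb])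
    have indG: "indicator A \<in> borel_measurable G" using AG by simp
    have intAS: "integrable M (\<lambda>w. indicator A w * S w ^ p)"
      using integrable_mult_indicator[OF AM intS] by simp
    have ce: "integrable M (\<lambda>w. indicator A w * ?E w)"
      "(\<integral>w. indicator A w * ?E w \<partial>M) = (\<integral>w. indicator A w * S w ^ p \<partial>M)"
      using fms.real_cond_exp_intg[OF intAS indG] Sm by auto
    have Ebound: "indicator A w * ?E w \<le> indicator A w * c ^ p" for w
    proof (cases "w \<in> A")
      case True
      then have "ereal (root p (?E w)) \<le> ereal c"
      proof -
        have "ereal (root p (?E w)) \<le> ?Q w"
          unfolding cond_esssup_def using p by (intro SUP_upper) auto
        moreover have "?Q w \<le> ereal c" using True unfolding A_def by auto
        ultimately show ?thesis by (rule order_trans)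
      qed
      then have r: "root p (?E w) \<le> c" by simp
      have "?E w \<le> c ^ p"
      proof (cases "0 \<le> ?E w")
        case True
        have "?E w = root p (?E w) ^ p" using True p by simp
        also have "\<dots> \<le> c ^ p" using r True p by (intro power_mono) (auto simp: real_root_ge_zero)
        finally show ?thesis .
      next
        case False
        have "0 \<le> c ^ p" using c by simp
        then show ?thesis using False by linarith
      qed
      then show ?thesis using True by simp
    qed simp
    have "(\<integral>w. indicator A w * S w ^ p \<partial>M) = (\<integral>w. indicator A w * ?E w \<partial>M)"
      using ce(2) by simp
    also have "\<dots> \<le> (\<integral>w. indicator A w * c ^ p \<partial>M)"
    proof (rule integral_mono)
      have "integrable M (indicator A :: 'a \<Rightarrow> real)" using AM by (simp add: emeasure_finite less_top[symmetric])
      then show "integrable M (\<lambda>w. indicator A w * c ^ p)" by simp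
    qed (use ce(1) Ebound in auto)
    also have "\<dots> = measure M A * c ^ p" using AM by simp
    also have "\<dots> \<le> c ^ p" using c by (simp add: mult_left_le_one_le)
    finally have up: "(\<integral>w. indicator A w * S w ^ p \<partial>M) \<le> c ^ p" .
    have "(\<integral>w. indicator B w * d ^ p \<partial>M) \<le> (\<integral>w. indicator A w * S w ^ p \<partial>M)"
    proof (rule integral_mono)
      have "integrable M (indicator B :: 'a \<Rightarrow> real)" using BM by (simp add: emeasure_finite less_top[symmetric])
      then show "integrable M (\<lambda>w. indicator B w * d ^ p)" by simp
      show "integrable M (\<lambda>w. indicator A w * S w ^ p)" by (rule intAS)
      fix w assume "w \<in> space M"
      show "indicator B w * d ^ p \<le> indicator A w * S w ^ p"
      proof (cases "w \<in> B")
        case True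
        then have "w \<in> A" "d < S w" using BA unfolding B_def by auto
        then show ?thesis using True c cd by (auto intro!: power_mono)
      qed (simp add: Snn)
    qed
    also note up
    finally show ?thesis using BM by (simp add: mult.commute)
  qed
  have "measure M B = 0"
  proof (rule ccontr)
    assume "measure M B \<noteq> 0"
    then have mB: "0 < measure M B" by (simp add: zero_less_measure_iff)
    have "c / d < 1" using c cd by simp
    then obtain n where n: "(c / d) ^ n < measure M B" using real_arch_pow_inv'[OF mB] by blast
    have dpos: "0 < d" using c cd by simp
    have "d ^ Suc n * measure M B \<le> c ^ Suc n" using key[of "Suc n"] by simp
    then have "measure M B \<le> (c / d) ^ Suc n" using dpos
      by (simp add: power_divide pos_le_divide_eq mult.commute)
    also have "\<dots> \<le> (c / d) ^ n" using c cd \<open>c / d < 1\<close> by (intro power_decreasing) auto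
    finally show False using n by simp
  qed
  then have "B \<in> null_sets M" using BM by (intro null_setsI) (simp_all add: emeasure_eq_measure)
  then have "AE w in M. w \<notin> B" by (rule AE_not_in)
  then show ?thesis
    by (rule AE_mp) (auto simp: B_def intro!: AE_I2)
qed

lemma CE_upper:
  fixes S :: "'a \<Rightarrow> real"
  assumes Sm: "S \<in> borel_measurable M" and Snn: "\<And>w. 0 \<le> S w"
    and Sb: "AE w in M. S w \<le> C"
  shows "AE w in M. ereal (S w) \<le> cond_esssup M G S w"
proof -
  have "\<forall>c d::rat. AE w in M. 0 < c \<longrightarrow> c < d \<longrightarrow> cond_esssup M G S w \<le> ereal (real_of_rat c) \<longrightarrow> S w \<le> real_of_rat d"
  proof (intro allI)
    fix c d :: rat
    show "AE w in M. 0 < c \<longrightarrow> c < d \<longrightarrow> cond_esssup M G S w \<le> ereal (real_of_rat c) \<longrightarrow> S w \<le> real_of_rat d"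
    proof (cases "0 < c \<and> c < d")
      case True
      then have "0 < real_of_rat c" "real_of_rat c < real_of_rat d" by (simp_all add: of_rat_less)
      from CE_upper_cd[OF Sm Snn Sb this] show ?thesis by (rule AE_mp) (auto intro!: AE_I2)
    qed auto
  qed
  then have "AE w in M. \<forall>c d::rat. 0 < c \<longrightarrow> c < d \<longrightarrow> cond_esssup M G S w \<le> ereal (real_of_rat c) \<longrightarrow> S w \<le> real_of_rat d"
    by (simp add: AE_all_countable)
  then show ?thesis using CE_nonneg[OF Sm Snn Sb]
  proof eventually_elim
    case (elim w)
    show ?case
    proof (rule ccontr)
      assume "\<not> ereal (S w) \<le> cond_esssup M G S w"
      then have lt: "cond_esssup M G S w < ereal (S w)" by simp
      then obtain q where q: "cond_esssup M G S w = ereal q"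
        using elim(2) by (cases "cond_esssup M G S w") auto
      have q0: "0 \<le> q" using elim(2) q by simp
      have "q < S w" using lt q by simp
      then obtain c where c: "c \<in> \<rat>" "q < c" "c < S w" using Rats_dense_in_real by blast
      then obtain d where d: "d \<in> \<rat>" "c < d" "d < S w" using Rats_dense_in_real by blast
      obtain c' where c': "c = real_of_rat c'" using c(1) Rats_cases by blast
      obtain d' where d': "d = real_of_rat d'" using d(1) Rats_cases by blast
      have "0 < real_of_rat c'" using c q0 c' by linarith
      then have "0 < c'" by (simp add: zero_less_of_rat_iff)
      moreover have "c' < d'" using d c' d' by (simp add: of_rat_less)
      moreover have "cond_esssup M G S w \<le> ereal (real_of_rat c')" using q c c' by simp
      ultimately have "S w \<le> d" using elim(1) d' by blast
      then show False using d by simp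
    qed
  qed
qed

end


lemma ereal_fin: "0 \<le> (a::ereal) \<Longrightarrow> a \<le> ereal C \<Longrightarrow> a = ereal (real_of_ereal a)"
  by (cases a) auto

locale exs = lfa v + cps M G for v :: "'k::field \<Rightarrow> real" and M :: "'a measure" and G +
  fixes X :: "'a \<Rightarrow> 'k"
  assumes XL: "X \<in> Linf M M v"
begin

abbreviation "LG \<equiv> Linf M G v"
definition "Q Z = cnorm M G v (\<lambda>w. X w - Z w)"

lemma XmM: "X \<in> measurable M (Kborel v)" using XL unfolding Linf_def by auto

lemma Xb: obtains CX where "0 \<le> CX" "AE w in M. v (X w) \<le> CX"
proof -
  obtain C where "AE w in M. v (X w) \<le> C" using XL unfolding Linf_def by auto
  then have "AE w in M. v (X w) \<le> max C 0" by (auto elim!: eventually_mono)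
  then show ?thesis using that[of "max C 0"] by auto
qed

lemma LG_mG: "Z \<in> LG \<Longrightarrow> Z \<in> measurable G (Kborel v)" unfolding Linf_def by auto
lemma LG_mM: "Z \<in> LG \<Longrightarrow> Z \<in> measurable M (Kborel v)"
  using measurable_from_subalg[OF subG] LG_mG by blast

lemma LG_b: assumes "Z \<in> LG" obtains C where "0 \<le> C" "AE w in M. v (Z w) \<le> C"
proof -
  obtain C where "AE w in M. v (Z w) \<le> C" using assms unfolding Linf_def by auto
  then have "AE w in M. v (Z w) \<le> max C 0" by (auto elim!: eventually_mono)
  then show ?thesis using that[of "max C 0"] by auto
qed

lemma LGI: assumes "Z \<in> measurable G (Kborel v)" "AE w in M. v (Z w) \<le> C" shows "Z \<in> LG"
  using assms unfolding Linf_def by auto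

lemma S_meas: "Z \<in> LG \<Longrightarrow> (\<lambda>w. v (X w - Z w)) \<in> borel_measurable M"
  by (intro meas_v meas_diff XmM LG_mM)

lemma S_b: assumes "Z \<in> LG" obtains C where "0 \<le> C" "AE w in M. v (X w - Z w) \<le> C"
proof -
  obtain CX where CX: "0 \<le> CX" "AE w in M. v (X w) \<le> CX" using Xb by blast
  obtain CZ where CZ: "0 \<le> CZ" "AE w in M. v (Z w) \<le> CZ" using LG_b[OF assms] by blast
  have "AE w in M. v (X w - Z w) \<le> max CX CZ"
    using CX(2) CZ(2)
  proof eventually_elim
    case (elim w) then show ?case using v_diff[of "X w" "Z w"] by auto
  qed
  then show ?thesis using that[of "max CX CZ"] CX CZ by auto
qed

lemma Q_meas: "Q Z \<in> borel_measurable G"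
  unfolding Q_def cnorm_def by (rule CE_meas)

lemma Q_measM: "Q Z \<in> borel_measurable M"
  using measurable_from_subalg[OF subG Q_meas] .

lemma Q_upper: assumes "Z \<in> LG" shows "AE w in M. ereal (v (X w - Z w)) \<le> Q Z w"
proof -
  obtain C where C: "0 \<le> C" "AE w in M. v (X w - Z w) \<le> C" using S_b[OF assms] by blast
  show ?thesis unfolding Q_def cnorm_def by (rule CE_upper[OF S_meas[OF assms] v_nonneg C(2)])
qed

lemma Q_least: assumes "Z \<in> LG" "T \<in> borel_measurable G" "AE w in M. ereal (v (X w - Z w)) \<le> T w"
  shows "AE w in M. Q Z w \<le> T w"
proof -
  obtain C where C: "0 \<le> C" "AE w in M. v (X w - Z w) \<le> C" using S_b[OF assms(1)] by blast
  show ?thesis unfolding Q_def cnorm_def by (rule CE_least[OF S_meas[OF assms(1)] v_nonneg C(2) C(1) assms(2,3)])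
qed

lemma Q_nonneg: assumes "Z \<in> LG" shows "AE w in M. 0 \<le> Q Z w"
proof -
  obtain C where C: "0 \<le> C" "AE w in M. v (X w - Z w) \<le> C" using S_b[OF assms] by blast
  show ?thesis unfolding Q_def cnorm_def by (rule CE_nonneg[OF S_meas[OF assms] v_nonneg C(2)])
qed

lemma Q_b: assumes "Z \<in> LG" obtains C where "0 \<le> C" "AE w in M. 0 \<le> Q Z w \<and> Q Z w \<le> ereal C"
proof -
  obtain C where C: "0 \<le> C" "AE w in M. v (X w - Z w) \<le> C" using S_b[OF assms] by blast
  have "AE w in M. Q Z w \<le> ereal C"
    using assms by (rule Q_least) (use C(2) in auto)
  then have "AE w in M. 0 \<le> Q Z w \<and> Q Z w \<le> ereal C" using Q_nonneg[OF assms] by auto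
  then show ?thesis using that C by blast
qed

lemma setG: "P \<in> measurable G (count_space UNIV) \<Longrightarrow> {w \<in> space M. P w} \<in> sets G"
  unfolding pred_def space_G[symmetric] .

lemma patch:
  assumes Z1: "Z1 \<in> LG" and Z2: "Z2 \<in> LG" and A: "A \<in> sets G"
  defines "Zp \<equiv> (\<lambda>w. if w \<in> A then Z1 w else Z2 w)"
  shows "Zp \<in> LG" "AE w in M. Q Zp w = (if w \<in> A then Q Z1 w else Q Z2 w)"
proof -
  have AM: "A \<inter> space G \<in> sets G" using A by simp
  have Zpm: "Zp \<in> measurable G (Kborel v)"
    unfolding Zp_def by (rule measurable_If_set[OF LG_mG[OF Z1] LG_mG[OF Z2] AM])
  obtain C1 where C1: "AE w in M. v (Z1 w) \<le> C1" using LG_b[OF Z1] by blast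
  obtain C2 where C2: "AE w in M. v (Z2 w) \<le> C2" using LG_b[OF Z2] by blast
  have "AE w in M. v (Zp w) \<le> max C1 C2" using C1 C2 by eventually_elim (auto simp: Zp_def)
  then show ZpL: "Zp \<in> LG" by (rule LGI[OF Zpm])
  define T where "T w = (if w \<in> A then Q Z1 w else Q Z2 w)" for w
  have Tm: "T \<in> borel_measurable G" unfolding T_def by (rule measurable_If_set[OF Q_meas Q_meas AM])
  have le1: "AE w in M. Q Zp w \<le> T w"
  proof (rule Q_least[OF ZpL Tm])
    show "AE w in M. ereal (v (X w - Zp w)) \<le> T w"
      using Q_upper[OF Z1] Q_upper[OF Z2] by eventually_elim (auto simp: T_def Zp_def)
  qed
  define T1 where "T1 w = (if w \<in> A then Q Zp w else Q Z1 w)" for w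
  have T1m: "T1 \<in> borel_measurable G" unfolding T1_def by (rule measurable_If_set[OF Q_meas Q_meas AM])
  have le2: "AE w in M. Q Z1 w \<le> T1 w"
  proof (rule Q_least[OF Z1 T1m])
    show "AE w in M. ereal (v (X w - Z1 w)) \<le> T1 w"
      using Q_upper[OF Z1] Q_upper[OF ZpL] by eventually_elim (auto simp: T1_def Zp_def)
  qed
  define T2 where "T2 w = (if w \<in> A then Q Z2 w else Q Zp w)" for w
  have T2m: "T2 \<in> borel_measurable G" unfolding T2_def by (rule measurable_If_set[OF Q_meas Q_meas AM])
  have le3: "AE w in M. Q Z2 w \<le> T2 w"
  proof (rule Q_least[OF Z2 T2m])
    show "AE w in M. ereal (v (X w - Z2 w)) \<le> T2 w"
      using Q_upper[OF Z2] Q_upper[OF ZpL] by eventually_elim (auto simp: T2_def Zp_def)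
  qed
  show "AE w in M. Q Zp w = (if w \<in> A then Q Z1 w else Q Z2 w)"
    using le1 le2 le3 by eventually_elim (auto simp: T_def T1_def T2_def split: if_splits)
qed

definition "J Z = (\<integral>w. real_of_ereal (Q Z w) \<partial>M)"

lemma J_int: assumes "Z \<in> LG" shows "integrable M (\<lambda>w. real_of_ereal (Q Z w))"
proof -
  obtain C where C: "0 \<le> C" "AE w in M. 0 \<le> Q Z w \<and> Q Z w \<le> ereal C" using Q_b[OF assms] by blast
  show ?thesis
  proof (rule integrable_const_bound[where B=C])
    show "AE w in M. norm (real_of_ereal (Q Z w)) \<le> C"
      using C(2) by eventually_elim (case_tac "Q Z w"; auto)
  qed (use Q_measM in measurable)
qed

lemma real_Q_le: assumes "0 \<le> a" "a \<le> b" "b \<le> ereal C" shows "real_of_ereal a \<le> real_of_ereal b"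
  using assms by (cases a; cases b) auto

lemma J_mono: assumes Z1: "Z1 \<in> LG" and Z2: "Z2 \<in> LG" and le: "AE w in M. Q Z1 w \<le> Q Z2 w"
  shows "J Z1 \<le> J Z2"
proof -
  obtain C where C: "0 \<le> C" "AE w in M. 0 \<le> Q Z2 w \<and> Q Z2 w \<le> ereal C" using Q_b[OF Z2] by blast
  show ?thesis unfolding J_def
  proof (rule integral_mono_AE[OF J_int[OF Z1] J_int[OF Z2]])
    show "AE w in M. real_of_ereal (Q Z1 w) \<le> real_of_ereal (Q Z2 w)"
      using le C(2) Q_nonneg[OF Z1] by eventually_elim (auto intro: real_Q_le)
  qed
qed

lemma J_nonneg: assumes "Z \<in> LG" shows "0 \<le> J Z"
  unfolding J_def
proof (rule integral_nonneg_AE)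
  show "AE w in M. 0 \<le> real_of_ereal (Q Z w)"
    using Q_nonneg[OF assms] by eventually_elim (simp add: real_of_ereal_pos)
qed

end


context lfa
begin

lemma disc:
  fixes r :: "nat \<Rightarrow> real"
  assumes e: "0 < e" and ge: "\<And>n. e \<le> r n" and dec: "\<And>n. r (Suc n) \<le> r n"
    and inf: "\<And>d. 0 < d \<Longrightarrow> \<exists>n. r n < e + d"
  shows "\<exists>k. \<forall>x\<in>range v. x \<le> r k \<longrightarrow> x \<le> e"
proof -
  have anti: "m \<le> n \<Longrightarrow> r n \<le> r m" for m n
    using lift_Suc_antimono_le[of r, OF dec] by blast
  define F where "F = {x \<in> range v. e < x \<and> x \<le> r 0}"
  have "F \<subseteq> {x \<in> range v. e \<le> x \<and> x \<le> r 0}" unfolding F_def by auto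
  then have finF: "finite F" using values_finite[OF e] by (rule finite_subset)
  show ?thesis
  proof (cases "F = {}")
    case True
    show ?thesis
    proof (intro exI[of _ 0] ballI impI)
      fix x assume "x \<in> range v" "x \<le> r 0"
      then show "x \<le> e" using True unfolding F_def by (auto simp: not_less)
    qed
  next
    case False
    define mu where "mu = Min F"
    have muF: "mu \<in> F" unfolding mu_def using finF False by (rule Min_in)
    have mu_le: "x \<in> F \<Longrightarrow> mu \<le> x" for x unfolding mu_def using finF by simp
    have "e < mu" using muF unfolding F_def by auto
    then obtain k where k: "r k < e + (mu - e)" using inf[of "mu - e"] by auto
    show ?thesis
    proof (intro exI[of _ k] ballI impI)
      fix x assume x: "x \<in> range v" "x \<le> r k"
      show "x \<le> e"
      proof (rule ccontr)
        assume "\<not> x \<le> e"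
        then have "x \<in> F" using x anti[of 0 k] unfolding F_def by auto
        then have "mu \<le> x" by (rule mu_le)
        then show False using x k by simp
      qed
    qed
  qed
qed

lemma cauchyv_nat: "cauchyv s \<longleftrightarrow> (\<forall>j::nat. \<exists>N. \<forall>n\<ge>N. \<forall>m\<ge>N. v (s n - s m) < 1 / real (Suc j))"
proof
  assume "cauchyv s" then show "\<forall>j::nat. \<exists>N. \<forall>n\<ge>N. \<forall>m\<ge>N. v (s n - s m) < 1 / real (Suc j)"
    unfolding cauchyv_def by simp
next
  assume H: "\<forall>j::nat. \<exists>N. \<forall>n\<ge>N. \<forall>m\<ge>N. v (s n - s m) < 1 / real (Suc j)"
  show "cauchyv s" unfolding cauchyv_def
  proof (intro allI impI)
    fix e :: real assume "0 < e"
    then obtain j where j: "inverse (real (Suc j)) < e" using reals_Archimedean by blast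
    obtain N where "\<forall>n\<ge>N. \<forall>m\<ge>N. v (s n - s m) < 1 / real (Suc j)" using H by blast
    then show "\<exists>N. \<forall>n\<ge>N. \<forall>m\<ge>N. v (s n - s m) < e" using j
      by (intro exI[of _ N]) (auto simp: inverse_eq_divide intro: less_trans)
  qed
qed

definition limv :: "(nat \<Rightarrow> 'k) \<Rightarrow> 'k" where
  "limv s = (if cauchyv s then (SOME l. (\<lambda>n. v (s n - l)) \<longlonglongrightarrow> 0) else 0)"

lemma limv: "cauchyv s \<Longrightarrow> (\<lambda>n. v (s n - limv s)) \<longlonglongrightarrow> 0"
  unfolding limv_def using complete by (auto intro: someI_ex)

lemma limv_ball:
  assumes c: "cauchyv s"
  shows "v (limv s - x) < r \<longleftrightarrow> (\<exists>q::rat. real_of_rat q < r \<and> (\<exists>N. \<forall>n\<ge>N. v (s n - x) \<le> real_of_rat q))"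
proof -
  let ?l = "limv s"
  have L: "(\<lambda>n. v (s n - ?l)) \<longlonglongrightarrow> 0" using limv[OF c] .
  have ev: "\<exists>N. \<forall>n\<ge>N. v (s n - ?l) < d" if "0 < d" for d
    using L that unfolding LIMSEQ_def dist_real_def by fastforce
  show ?thesis
  proof
    assume a: "v (?l - x) < r"
    obtain q where q: "q \<in> \<rat>" "v (?l - x) < q" "q < r" using Rats_dense_in_real[OF a] by blast
    obtain q' where q': "q = real_of_rat q'" using q(1) Rats_cases by blast
    have "0 < q" using q(2) v_nonneg[of "?l - x"] by linarith
    then obtain N where N: "\<forall>n\<ge>N. v (s n - ?l) < q" using ev by blast
    have "\<forall>n\<ge>N. v (s n - x) \<le> q"
    proof (intro allI impI)
      fix n assume "N \<le> n"
      have "v (s n - x) \<le> max (v (s n - ?l)) (v (?l - x))" by (rule v_tri)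
      then show "v (s n - x) \<le> q" using N \<open>N \<le> n\<close> q(2) by auto
    qed
    then show "\<exists>q::rat. real_of_rat q < r \<and> (\<exists>N. \<forall>n\<ge>N. v (s n - x) \<le> real_of_rat q)"
      using q q' by (intro exI[of _ q']) auto
  next
    assume "\<exists>q::rat. real_of_rat q < r \<and> (\<exists>N. \<forall>n\<ge>N. v (s n - x) \<le> real_of_rat q)"
    then obtain q N where qN: "real_of_rat q < r" "\<And>n. n \<ge> N \<Longrightarrow> v (s n - x) \<le> real_of_rat q" by blast
    have "0 \<le> real_of_rat q" using qN(2)[of N] v_nonneg[of "s N - x"] by linarith
    then have "0 < r" using qN(1) by linarith
    then obtain N2 where N2: "\<forall>n\<ge>N2. v (s n - ?l) < r" using ev by blast
    let ?n = "max N N2"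
    have "v (?l - x) \<le> max (v (?l - s ?n)) (v (s ?n - x))" by (rule v_tri)
    moreover have "v (s ?n - ?l) < r" using N2 by simp
    then have "v (?l - s ?n) < r" by (simp add: v_sub_sym)
    moreover have "v (s ?n - x) \<le> real_of_rat q" using qN(2)[of ?n] by simp
    then have "v (s ?n - x) < r" using qN(1) by linarith
    ultimately show "v (?l - x) < r" by auto
  qed
qed

lemma limv_meas:
  assumes W: "\<And>n. W n \<in> measurable N (Kborel v)"
  shows "(\<lambda>w. limv (\<lambda>n. W n w)) \<in> measurable N (Kborel v)"
proof -
  have vm[measurable]: "(\<lambda>w. v (W n w - W m w)) \<in> borel_measurable N" for n m
    by (intro meas_v meas_diff W)
  have vx[measurable]: "(\<lambda>w. v (W n w - x)) \<in> borel_measurable N" for n x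
    by (intro meas_vshift W)
  have Cm: "{w \<in> space N. cauchyv (\<lambda>n. W n w)} \<in> sets N"
    unfolding cauchyv_nat by measurable
  show ?thesis
    unfolding measurable_K_iff
  proof (intro allI)
    fix x r
    have eq: "{w \<in> space N. v (limv (\<lambda>n. W n w) - x) < r} =
      {w \<in> space N. cauchyv (\<lambda>n. W n w) \<and> (\<exists>q::rat. real_of_rat q < r \<and> (\<exists>N. \<forall>n\<ge>N. v (W n w - x) \<le> real_of_rat q))}
      \<union> {w \<in> space N. \<not> cauchyv (\<lambda>n. W n w) \<and> v (0 - x) < r}"
    proof (intro set_eqI)
      fix w
      show "w \<in> {w \<in> space N. v (limv (\<lambda>n. W n w) - x) < r} \<longleftrightarrow> w \<in> {w \<in> space N. cauchyv (\<lambda>n. W n w) \<and> (\<exists>q::rat. real_of_rat q < r \<and> (\<exists>N. \<forall>n\<ge>N. v (W n w - x) \<le> real_of_rat q))}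
      \<union> {w \<in> space N. \<not> cauchyv (\<lambda>n. W n w) \<and> v (0 - x) < r}"
      proof (cases "cauchyv (\<lambda>n. W n w)")
        case True
        then show ?thesis using limv_ball[OF True, of x r] by auto
      next
        case False
        then have "limv (\<lambda>n. W n w) = 0" unfolding limv_def by simp
        then show ?thesis using False by auto
      qed
    qed
    have "{w \<in> space N. cauchyv (\<lambda>n. W n w) \<and> (\<exists>q::rat. real_of_rat q < r \<and> (\<exists>N. \<forall>n\<ge>N. v (W n w - x) \<le> real_of_rat q))} \<in> sets N"
      using Cm by measurable
    moreover have "{w \<in> space N. \<not> cauchyv (\<lambda>n. W n w) \<and> v (0 - x) < r} \<in> sets N"
      using Cm by measurable
    ultimately show "{w \<in> space N. v (limv (\<lambda>n. W n w) - x) < r} \<in> sets N"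
      unfolding eq by blast
  qed
qed

end


context lfa
begin

lemma pointwise:
  fixes x :: 'k and Wn :: "nat \<Rightarrow> 'k" and q :: "nat \<Rightarrow> ereal"
  assumes up: "\<And>n. ereal (v (x - Wn n)) \<le> q n" and dec: "\<And>n. q (Suc n) \<le> q n"
    and nn: "\<And>n. 0 \<le> q n" and b: "q 0 \<le> ereal B0"
  shows "0 < (INF n. q n) \<Longrightarrow> \<exists>k. \<forall>n\<ge>k. ereal (v (Wn n - Wn k)) \<le> (INF n. q n)"
    and "(\<forall>n\<ge>k. ereal (v (Wn n - Wn k)) \<le> (INF n. q n)) \<Longrightarrow> ereal (v (x - Wn k)) \<le> (INF n. q n)"
    and "\<not> 0 < (INF n. q n) \<Longrightarrow> cauchyv Wn \<and> ereal (v (x - limv Wn)) \<le> (INF n. q n)"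
proof -
  define e where "e = (INF n. q n)"
  have anti: "m \<le> n \<Longrightarrow> q n \<le> q m" for m n
    using lift_Suc_antimono_le[of q, OF dec] by blast
  define qr where "qr n = real_of_ereal (q n)" for n
  have qfin: "q n = ereal (qr n)" for n
  proof -
    have "q n \<le> ereal B0" using anti[of 0 n] b by simp
    then show ?thesis unfolding qr_def using nn[of n] by (cases "q n") auto
  qed
  have qr_anti: "m \<le> n \<Longrightarrow> qr n \<le> qr m" for m n using anti[of m n] qfin by simp
  have upr: "v (x - Wn n) \<le> qr n" for n using up[of n] qfin[of n] by simp
  have nest: "m \<ge> n \<Longrightarrow> v (Wn m - Wn n) \<le> qr n" for m n
  proof -
    assume mn: "m \<ge> n"
    have "Wn m - Wn n = (x - Wn n) - (x - Wn m)" by simp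
    then have "v (Wn m - Wn n) \<le> max (v (x - Wn n)) (v (x - Wn m))" using v_diff by metis
    also have "\<dots> \<le> qr n" using upr[of n] upr[of m] qr_anti[OF mn] by auto
    finally show ?thesis .
  qed
  have e0: "0 \<le> e" unfolding e_def using nn by (intro INF_greatest) auto
  have eb: "e \<le> q 0" unfolding e_def by (rule INF_lower) simp
  define er where "er = real_of_ereal e"
  have efin: "e = ereal er" unfolding er_def using e0 eb b by (cases e) auto
  have er_le: "er \<le> qr n" for n
  proof -
    have "e \<le> q n" unfolding e_def by (rule INF_lower) simp
    then show ?thesis using efin qfin by simp
  qed
  have er_inf: "\<exists>n. qr n < er + d" if "0 < d" for d
  proof -
    have "e < ereal (er + d)" using efin that by simp
    then obtain n where "q n < ereal (er + d)" unfolding e_def by (auto simp: INF_less_iff)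
    then show ?thesis using qfin by auto
  qed
  show "0 < (INF n. q n) \<Longrightarrow> \<exists>k. \<forall>n\<ge>k. ereal (v (Wn n - Wn k)) \<le> (INF n. q n)"
  proof -
    assume "0 < (INF n. q n)"
    then have epos: "0 < er" using efin unfolding e_def by simp
    obtain k where k: "\<forall>y\<in>range v. y \<le> qr k \<longrightarrow> y \<le> er"
      using disc[of er qr, OF epos er_le] qr_anti er_inf by auto
    have "\<forall>n\<ge>k. ereal (v (Wn n - Wn k)) \<le> e"
    proof (intro allI impI)
      fix n assume "k \<le> n"
      then have "v (Wn n - Wn k) \<le> qr k" by (rule nest)
      then have "v (Wn n - Wn k) \<le> er" using k by blast
      then show "ereal (v (Wn n - Wn k)) \<le> e" using efin by simp
    qed
    then show ?thesis unfolding e_def by blast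
  qed
  show "(\<forall>n\<ge>k. ereal (v (Wn n - Wn k)) \<le> (INF n. q n)) \<Longrightarrow> ereal (v (x - Wn k)) \<le> (INF n. q n)"
  proof -
    assume P: "\<forall>n\<ge>k. ereal (v (Wn n - Wn k)) \<le> (INF n. q n)"
    have "ereal (v (x - Wn k)) \<le> q n" for n
    proof (cases "k \<le> n")
      case True
      have "v (Wn n - Wn k) \<le> er" using P True efin unfolding e_def by auto
      moreover have "v (x - Wn k) \<le> max (v (x - Wn n)) (v (Wn n - Wn k))" by (rule v_tri)
      ultimately have "v (x - Wn k) \<le> qr n" using upr[of n] er_le[of n] by auto
      then show ?thesis using qfin by simp
    next
      case False
      then have "qr k \<le> qr n" using qr_anti by simp
      then show ?thesis using upr[of k] qfin by simp
    qed
    then show ?thesis by (intro INF_greatest) auto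
  qed
  show "\<not> 0 < (INF n. q n) \<Longrightarrow> cauchyv Wn \<and> ereal (v (x - limv Wn)) \<le> (INF n. q n)"
  proof -
    assume "\<not> 0 < (INF n. q n)"
    then have er0: "er = 0" using efin e0 unfolding e_def by simp
    have small: "\<exists>N. \<forall>n\<ge>N. qr n < d" if dpos: "0 < d" for d
    proof -
      obtain N where "qr N < d" using er_inf[OF dpos] er0 by auto
      then show ?thesis using qr_anti by (meson le_less_trans)
    qed
    have cy: "cauchyv Wn" unfolding cauchyv_def
    proof (intro allI impI)
      fix d :: real assume "0 < d"
      then obtain N where N: "\<forall>n\<ge>N. qr n < d" using small by blast
      have "v (Wn n - Wn m) < d" if "n \<ge> N" "m \<ge> N" for n m
      proof -
        have "v (Wn n - Wn m) \<le> max (v (Wn n - Wn N)) (v (Wn N - Wn m))" by (rule v_tri)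
        moreover have "v (Wn N - Wn m) = v (Wn m - Wn N)" by (rule v_sub_sym)
        ultimately have "v (Wn n - Wn m) \<le> qr N" using nest[OF that(1)] nest[OF that(2)] by auto
        then show ?thesis using N by auto
      qed
      then show "\<exists>N. \<forall>n\<ge>N. \<forall>m\<ge>N. v (Wn n - Wn m) < d" by blast
    qed
    have L: "(\<lambda>n. v (Wn n - limv Wn)) \<longlonglongrightarrow> 0" by (rule limv[OF cy])
    have "v (x - limv Wn) < d" if d: "0 < d" for d
    proof -
      obtain N1 where N1: "\<forall>n\<ge>N1. qr n < d" using small[OF d] by blast
      obtain N2 where N2: "\<forall>n\<ge>N2. v (Wn n - limv Wn) < d"
        using L d unfolding LIMSEQ_def dist_real_def by fastforce
      let ?n = "max N1 N2"
      have "v (x - limv Wn) \<le> max (v (x - Wn ?n)) (v (Wn ?n - limv Wn))" by (rule v_tri)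
      moreover have "qr ?n < d" using N1 by simp
      then have "v (x - Wn ?n) < d" using upr[of ?n] by linarith
      moreover have "v (Wn ?n - limv Wn) < d" using N2 by simp
      ultimately show ?thesis by auto
    qed
    then have "v (x - limv Wn) \<le> 0" by (metis less_irrefl not_le)
    then have "ereal (v (x - limv Wn)) \<le> e" using efin er0 by simp
    then show ?thesis using cy unfolding e_def by blast
  qed
qed

end


context exs
begin

lemma setQ: "{w \<in> space M. Q Z1 w < Q Z2 w} \<in> sets G"
  unfolding space_G[symmetric] using Q_meas[of Z1] Q_meas[of Z2] by measurable

lemma zero_LG: "(\<lambda>w. 0) \<in> LG"
  by (rule LGI[where C=0]) auto

lemma exists_opt: "\<exists>Z\<in>LG. \<forall>Z'\<in>LG. AE w in M. Q Z w \<le> Q Z' w"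
proof -
  define m where "m = Inf (J ` LG)"
  have bdd: "bdd_below (J ` LG)" using J_nonneg by (intro bdd_belowI[of _ 0]) auto
  have Jm: "Z \<in> LG \<Longrightarrow> m \<le> J Z" for Z unfolding m_def using bdd by (intro cInf_lower) auto
  have ne: "J ` LG \<noteq> {}" using zero_LG by blast
  have "\<exists>Z\<in>LG. J Z < m + 1 / real (Suc n)" for n
  proof -
    have "Inf (J ` LG) < m + 1 / real (Suc n)" unfolding m_def by simp
    then obtain y where "y \<in> J ` LG" "y < m + 1 / real (Suc n)" using cInf_lessD[OF ne] by blast
    then show ?thesis by blast
  qed
  then obtain Zs where Zs: "\<And>n. Zs n \<in> LG" "\<And>n. J (Zs n) < m + 1 / real (Suc n)" by metis
  define step where "step n Wn = (\<lambda>w. if w \<in> {w \<in> space M. Q (Zs (Suc n)) w < Q Wn w} then Zs (Suc n) w else Wn w)" for n Wn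
  define W where "W = rec_nat (Zs 0) step"
  have W0: "W 0 = Zs 0" and WS: "W (Suc n) = step n (W n)" for n unfolding W_def by simp_all
  have WL: "W n \<in> LG" for n
  proof (induction n)
    case 0 then show ?case using Zs(1) W0 by simp
  next
    case (Suc n) then show ?case unfolding WS step_def by (intro patch(1) Zs(1) setQ)
  qed
  have Wmin: "AE w in M. Q (W (Suc n)) w = min (Q (Zs (Suc n)) w) (Q (W n) w)" for n
  proof -
    have "AE w in M. Q (W (Suc n)) w = (if w \<in> {w \<in> space M. Q (Zs (Suc n)) w < Q (W n) w} then Q (Zs (Suc n)) w else Q (W n) w)"
      unfolding WS step_def by (intro patch(2) Zs(1) setQ WL)
    then show ?thesis using AE_space by eventually_elim (auto simp: min_def)
  qed
  have WleZ: "AE w in M. Q (W n) w \<le> Q (Zs n) w" for n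
  proof (cases n)
    case 0 then show ?thesis using W0 by simp
  next
    case (Suc k)
    have "AE w in M. Q (W (Suc k)) w \<le> Q (Zs (Suc k)) w" using Wmin[of k] by eventually_elim auto
    then show ?thesis using Suc by simp
  qed
  have Wdec: "AE w in M. Q (W (Suc n)) w \<le> Q (W n) w" for n
    using Wmin[of n] by eventually_elim auto
  obtain B0 where B0: "0 \<le> B0" "AE w in M. 0 \<le> Q (W 0) w \<and> Q (W 0) w \<le> ereal B0"
    using Q_b[OF WL[of 0]] by blast
  have good: "AE w in M. (\<forall>n. ereal (v (X w - W n w)) \<le> Q (W n) w) \<and> (\<forall>n. Q (W (Suc n)) w \<le> Q (W n) w)
     \<and> (\<forall>n. 0 \<le> Q (W n) w) \<and> Q (W 0) w \<le> ereal B0"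
  proof -
    have "AE w in M. \<forall>n. ereal (v (X w - W n w)) \<le> Q (W n) w"
      using Q_upper[OF WL] by (simp add: AE_all_countable)
    moreover have "AE w in M. \<forall>n. Q (W (Suc n)) w \<le> Q (W n) w"
      using Wdec by (simp add: AE_all_countable)
    moreover have "AE w in M. \<forall>n. 0 \<le> Q (W n) w"
      using Q_nonneg[OF WL] by (simp add: AE_all_countable)
    ultimately show ?thesis using B0(2) AE_space by eventually_elim auto
  qed
  have good: "AE w in M. w \<in> space M \<and> (\<forall>n. ereal (v (X w - W n w)) \<le> Q (W n) w) \<and> (\<forall>n. Q (W (Suc n)) w \<le> Q (W n) w)
     \<and> (\<forall>n. 0 \<le> Q (W n) w) \<and> Q (W 0) w \<le> ereal B0"
    using good AE_space by eventually_elim auto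
  define e where "e w = (INF n. Q (W n) w)" for w
  have em[measurable]: "e \<in> borel_measurable G" unfolding e_def using Q_meas by measurable
  define P where "P k w = (\<forall>n\<ge>k. ereal (v (W n w - W k w)) \<le> e w)" for k w
  have WmG[measurable]: "W n \<in> measurable G (Kborel v)" for n using LG_mG[OF WL] .
  have vWW[measurable]: "(\<lambda>w. v (W n w - W k w)) \<in> borel_measurable G" for n k
    by (intro meas_v meas_diff WmG)
  have Pm[measurable]: "(\<lambda>w. P k w) \<in> measurable G (count_space UNIV)" for k
    unfolding P_def by measurable
  define A1 where "A1 = {w \<in> space M. 0 < e w \<and> (\<exists>k. P k w)}"
  have A1G: "A1 \<in> sets G" unfolding A1_def space_G[symmetric] by measurable
  define Zst where "Zst w = (if w \<in> A1 then W (LEAST k. P k w) w else limv (\<lambda>n. W n w))" for w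
  have Zm: "Zst \<in> measurable G (Kborel v)"
    unfolding Zst_def
  proof (rule measurable_If_set)
    show "(\<lambda>w. W (LEAST k. P k w) w) \<in> measurable G (Kborel v)"
      by (rule measurable_compose_countable[OF WmG]) measurable
    show "(\<lambda>w. limv (\<lambda>n. W n w)) \<in> measurable G (Kborel v)" by (rule limv_meas[OF WmG])
    show "A1 \<inter> space G \<in> sets G" using A1G by simp
  qed
  have key: "AE w in M. ereal (v (X w - Zst w)) \<le> e w"
    using good
  proof eventually_elim
    case (elim w)
    note pw = pointwise[of "X w" "\<lambda>n. W n w" "\<lambda>n. Q (W n) w" B0]
    have h: "\<And>n. ereal (v (X w - W n w)) \<le> Q (W n) w" "\<And>n. Q (W (Suc n)) w \<le> Q (W n) w"
      "\<And>n. 0 \<le> Q (W n) w" "Q (W 0) w \<le> ereal B0" using elim by auto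
    show ?case
    proof (cases "w \<in> A1")
      case True
      then have ex: "\<exists>k. P k w" unfolding A1_def by blast
      have "P (LEAST k. P k w) w" using LeastI_ex[OF ex] .
      then have "ereal (v (X w - W (LEAST k. P k w) w)) \<le> e w"
        using pw(2)[OF h] unfolding P_def e_def by blast
      then show ?thesis using True unfolding Zst_def by simp
    next
      case False
      have "\<not> 0 < e w"
      proof
        assume "0 < e w"
        then have "\<exists>k. P k w" using pw(1)[OF h] unfolding P_def e_def by blast
        then show False using False \<open>0 < e w\<close> elim unfolding A1_def by blast
      qed
      then show ?thesis using pw(3)[OF h] False unfolding Zst_def e_def by simp
    qed
  qed
  obtain CX where CX: "0 \<le> CX" "AE w in M. v (X w) \<le> CX" using Xb by blast
  have eW: "e w \<le> Q (W n) w" for w n unfolding e_def by (rule INF_lower) simp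
  have ZL: "Zst \<in> LG"
  proof (rule LGI[OF Zm])
    show "AE w in M. v (Zst w) \<le> max CX B0"
      using key CX(2) B0(2)
    proof eventually_elim
      case (elim w)
      have "ereal (v (X w - Zst w)) \<le> ereal B0" using elim eW[of w 0] by (meson order_trans)
      then have a: "v (X w - Zst w) \<le> B0" by simp
      have "Zst w = X w - (X w - Zst w)" by simp
      then have "v (Zst w) \<le> max (v (X w)) (v (X w - Zst w))" using v_diff by metis
      then show ?case using a elim by auto
    qed
  qed
  have QZe: "AE w in M. Q Zst w \<le> e w" by (rule Q_least[OF ZL em key])
  have JZW: "J Zst \<le> J (W n)" for n
  proof (rule J_mono[OF ZL WL])
    show "AE w in M. Q Zst w \<le> Q (W n) w" using QZe by eventually_elim (rule order_trans[OF _ eW])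
  qed
  have JWZ: "J (W n) \<le> J (Zs n)" for n using J_mono[OF WL Zs(1)] WleZ by blast
  have JZm: "J Zst \<le> m"
  proof (rule ccontr)
    assume "\<not> J Zst \<le> m"
    then have "0 < J Zst - m" by simp
    then obtain n where n: "inverse (real (Suc n)) < J Zst - m" using reals_Archimedean by blast
    have "J Zst < m + 1 / real (Suc n)" using JZW[of n] JWZ[of n] Zs(2)[of n] by linarith
    then show False using n by (simp add: inverse_eq_divide)
  qed
  show ?thesis
  proof (intro bexI[OF _ ZL] ballI)
    fix Z' assume Z': "Z' \<in> LG"
    define A where "A = {w \<in> space M. Q Z' w < Q Zst w}"
    have AG: "A \<in> sets G" unfolding A_def by (rule setQ)
    define Zp where "Zp = (\<lambda>w. if w \<in> A then Z' w else Zst w)"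
    have ZpL: "Zp \<in> LG" unfolding Zp_def by (rule patch(1)[OF Z' ZL AG])
    have Zpe: "AE w in M. Q Zp w = (if w \<in> A then Q Z' w else Q Zst w)"
      unfolding Zp_def by (rule patch(2)[OF Z' ZL AG])
    obtain C1 where C1: "AE w in M. 0 \<le> Q Z' w \<and> Q Z' w \<le> ereal C1" using Q_b[OF Z'] by blast
    obtain C2 where C2: "AE w in M. 0 \<le> Q Zst w \<and> Q Zst w \<le> ereal C2" using Q_b[OF ZL] by blast
    define f where "f w = real_of_ereal (Q Zst w) - real_of_ereal (Q Zp w)" for w
    have fint: "integrable M f" unfolding f_def using J_int[OF ZL] J_int[OF ZpL] by simp
    have fnn: "AE w in M. 0 \<le> f w"
      using Zpe C1 C2
    proof eventually_elim
      case (elim w)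
      show ?case
      proof (cases "w \<in> A")
        case True
        then have "Q Z' w < Q Zst w" unfolding A_def by simp
        then show ?thesis using elim True unfolding f_def
          by (cases "Q Z' w"; cases "Q Zst w") auto
      qed (use elim in \<open>simp add: f_def\<close>)
    qed
    have "integral\<^sup>L M f = J Zst - J Zp" unfolding f_def J_def using J_int[OF ZL] J_int[OF ZpL] by simp
    also have "\<dots> \<le> 0" using JZm Jm[OF ZpL] by simp
    finally have "integral\<^sup>L M f \<le> 0" .
    moreover have "0 \<le> integral\<^sup>L M f" using fnn by (rule integral_nonneg_AE)
    ultimately have "integral\<^sup>L M f = 0" by simp
    then have f0: "AE w in M. f w = 0" using integral_nonneg_eq_0_iff_AE[OF fint fnn] by simp
    show "AE w in M. Q Zst w \<le> Q Z' w"
      using f0 Zpe C1 C2 AE_space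
    proof eventually_elim
      case (elim w)
      show ?case
      proof (cases "w \<in> A")
        case True
        then have "Q Z' w < Q Zst w" unfolding A_def by simp
        moreover have "real_of_ereal (Q Zst w) = real_of_ereal (Q Z' w)" using elim True unfolding f_def by simp
        ultimately show ?thesis using elim by (cases "Q Z' w"; cases "Q Zst w") auto
      next
        case False
        then show ?thesis using elim unfolding A_def by auto
      qed
    qed
  qed
qed

end


lemma condE_ne:
  assumes "prob_space M" "local_field_abs v" "X \<in> Linf M M v" "subalgebra M G"
  shows "condE M G v X \<noteq> {}"
proof -
  interpret exs v M G X
    by (simp add: exs_def exs_axioms_def cps_def cps_axioms_def lfa_def assms)
  obtain Z where Z: "Z \<in> Linf M G v" "\<forall>Z'\<in>Linf M G v. AE w in M. Q Z w \<le> Q Z' w"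
    using exists_opt by blast
  have "Z \<in> condE M G v X" unfolding condE_def using Z unfolding Q_def by simp
  then show ?thesis by blast
qed

lemma meas_sub:
  assumes "f \<in> measurable G N" "sets G \<subseteq> sets H" "space G = space H"
  shows "f \<in> measurable H N"
  using assms unfolding measurable_def by auto

lemma Linf_sub:
  assumes "Z \<in> Linf M G v" "sets G \<subseteq> sets H" "space G = space H"
  shows "Z \<in> Linf M H v"
proof -
  have "Z \<in> measurable G (Kborel v)" "\<exists>C. AE w in M. v (Z w) \<le> C" using assms(1) unfolding Linf_def by auto
  moreover have "Z \<in> measurable H (Kborel v)" using meas_sub[OF calculation(1) assms(2,3)] .
  ultimately show ?thesis unfolding Linf_def by blast
qed

theorem mainTheorem14:
  fixes M G H :: "'a measure" and v :: "'k::field \<Rightarrow> real"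
    and X Y :: "'a \<Rightarrow> 'k"
  assumes "prob_space M"
    and "local_field_abs v"
    and "X \<in> Linf M M v"
    and "subalgebra M G" and "subalgebra M H" and "sets G \<subseteq> sets H"
    and "Y \<in> condE M H v X"
  shows "AE \<omega> in M. eps M G v Y \<omega> \<le> eps M G v X \<omega>"
proof -
  have spG: "space G = space M" and spH: "space H = space M"
    using assms(4,5) unfolding subalgebra_def by auto
  have YH: "Y \<in> Linf M H v" using assms(7) unfolding condE_def by blast
  have YM: "Y \<in> Linf M M v"
    using YH measurable_from_subalg[OF assms(5)] unfolding Linf_def by blast
  interpret XG: exs v M G X by (simp add: exs_def exs_axioms_def cps_def cps_axioms_def lfa_def assms)
  interpret XH: exs v M H X by (simp add: exs_def exs_axioms_def cps_def cps_axioms_def lfa_def assms)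
  interpret YG: exs v M G Y by (simp add: exs_def exs_axioms_def cps_def cps_axioms_def lfa_def assms YM)
  define Zc where "Zc = (SOME Z. Z \<in> condE M G v X)"
  define Wc where "Wc = (SOME Z. Z \<in> condE M G v Y)"
  have Zc: "Zc \<in> condE M G v X" unfolding Zc_def
    using condE_ne[OF assms(1,2,3,4)] by (simp add: some_in_eq)
  have Wc: "Wc \<in> condE M G v Y" unfolding Wc_def
    using condE_ne[OF assms(1,2) YM assms(4)] by (simp add: some_in_eq)
  have ZcG: "Zc \<in> Linf M G v" using Zc unfolding condE_def by blast
  have ZcH: "Zc \<in> Linf M H v" using Linf_sub[OF ZcG assms(6)] spG spH by simp
  have epsY: "eps M G v Y = YG.Q Wc" unfolding eps_def YG.Q_def Wc_def ..
  have epsX: "eps M G v X = XG.Q Zc" unfolding eps_def XG.Q_def Zc_def ..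
  have "\<forall>Z\<in>Linf M G v. AE w in M. YG.Q Wc w \<le> YG.Q Z w"
    using Wc unfolding condE_def YG.Q_def by simp
  then have s1: "AE w in M. YG.Q Wc w \<le> YG.Q Zc w" using ZcG by simp
  have TH: "XG.Q Zc \<in> borel_measurable H"
    using meas_sub[OF XG.Q_meas assms(6)] spG spH by simp
  have h1: "AE w in M. ereal (v (X w - Y w)) \<le> XH.Q Y w" by (rule XH.Q_upper[OF YH])
  have "\<forall>Z\<in>Linf M H v. AE w in M. XH.Q Y w \<le> XH.Q Z w"
    using assms(7) unfolding condE_def XH.Q_def by simp
  then have h2: "AE w in M. XH.Q Y w \<le> XH.Q Zc w" using ZcH by simp
  have h3: "AE w in M. XH.Q Zc w \<le> XG.Q Zc w"
    by (rule XH.Q_least[OF ZcH TH XG.Q_upper[OF ZcG]])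
  have h4: "AE w in M. ereal (v (X w - Zc w)) \<le> XG.Q Zc w" by (rule XG.Q_upper[OF ZcG])
  have s2: "AE w in M. YG.Q Zc w \<le> XG.Q Zc w"
  proof (rule YG.Q_least[OF ZcG XG.Q_meas])
    show "AE w in M. ereal (v (Y w - Zc w)) \<le> XG.Q Zc w"
      using h1 h2 h3 h4
    proof eventually_elim
      case (elim w)
      have "v (Y w - Zc w) \<le> max (v (Y w - X w)) (v (X w - Zc w))" by (rule XG.v_tri)
      moreover have "v (Y w - X w) = v (X w - Y w)" by (rule XG.v_sub_sym)
      ultimately have m: "v (Y w - Zc w) \<le> v (X w - Y w) \<or> v (Y w - Zc w) \<le> v (X w - Zc w)"
        by linarith
      have xy: "ereal (v (X w - Y w)) \<le> XG.Q Zc w"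
        using order_trans[OF elim(1) order_trans[OF elim(2) elim(3)]] .
      from m show ?case
      proof
        assume "v (Y w - Zc w) \<le> v (X w - Y w)"
        then have "ereal (v (Y w - Zc w)) \<le> ereal (v (X w - Y w))" by simp
        then show ?case using xy by (rule order_trans)
      next
        assume "v (Y w - Zc w) \<le> v (X w - Zc w)"
        then have "ereal (v (Y w - Zc w)) \<le> ereal (v (X w - Zc w))" by simp
        then show ?case using elim(4) by (rule order_trans)
      qed
    qed
  qed
  show ?thesis unfolding epsY epsX using s1 s2 by eventually_elim (rule order_trans)
qed


end
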